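(* Suppose Assumptions A1 and A2 hold, let $\beta>0$, and let $(x(t),y(t))$, $t\ge0$, be the solution of the prediction-correction dynamics $$\dot x=-F(x,y),\qquad \dot y=-[\nabla^2_{yy}g(x,y)]^{-1}\big[\beta\nabla_y g(x,y)+\nabla^2_{yx}g(x,y)\dot x\big]$$ from an arbitrary initialization $(x(0),y(0))$. Let $x^\star$ be a global minimizer of $\ell$. Then for every $t>0$, $$\frac{1}{2t}\int_0^t\|\nabla\ell(x(\tau))\|^2d\tau\le\frac1t\Big(\ell(x(0))-\ell(x^\star)+\frac{M_1^2}{4\beta\mu_g^2}\|\nabla_y g(x(0),y(0))\|^2\Big).$$
   Context: $f,g:\mathbb{R}^n\times\mathbb{R}^m\to\mathbb{R}$; $\nabla^2_{yx}g(x,y)\in\mathbb{R}^{m\times n}$ is the Jacobian with respect to $x$ of $\nabla_y g(x,y)$, $\nabla^2_{yy}g$ the Hessian in $y$. Assumption A1: $f$ is continuously differentiable; $\|\nabla_x f\|\le C^f_x$, $\|\nabla_y f\|\le C^f_y$ everywhere; $\nabla_x f,\nabla_y f$ Lipschitz on $\mathbb{R}^n\times\mathbb{R}^m$. Assumption A2: $g$ is twice continuously differentiable; $g(x,\cdot)$ is $\mu_g$-strongly convex for each $x$; $\nabla_y g(x,\cdot)$ is $L^g_{yy}$-Lipschitz for each $x$ and $\nabla_y g(\cdot,y)$ is $L^g_{yx}$-Lipschitz for each $y$; $\nabla^2_{yx}g$, $\nabla^2_{yy}g$ are Lipschitz on $\mathbb{R}^n\times\mathbb{R}^m$. $y^\star(x):=\arg\min_y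 g(x,y)$, $\ell(x):=f(x,y^\star(x))$, $F(x,y):=\nabla_x f(x,y)-\nabla^2_{yx}g(x,y)^\top[\nabla^2_{yy}g(x,y)]^{-1}\nabla_y f(x,y)$; $M_1>0$ is a constant with $\|\nabla\ell(x)-F(x,y)\|\le M_1\|y-y^\star(x)\|$ for all $x,y$. *)

theory Defs
  imports "HOL-Analysis.Analysis"
begin

definition strongly_convex_on :: "real \<Rightarrow> 'a::real_normed_vector set \<Rightarrow> ('a \<Rightarrow> real) \<Rightarrow> bool" where
  "strongly_convex_on \<mu> S h \<longleftrightarrow> convex S \<and>
     (\<forall>a\<in>S. \<forall>b\<in>S. \<forall>\<theta>::real. 0 \<le> \<theta> \<and> \<theta> \<le> 1 \<longrightarrow>
        h (\<theta> *\<^sub>R a + (1 - \<theta>) *\<^sub>R b) \<le> \<theta> * h a + (1 - \<theta>) * h b - \<mu> / 2 * \<theta> * (1 - \<theta>) * (norm (a - b))\<^sup>2)"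

definition ystar :: "('x \<times> 'y \<Rightarrow> real) \<Rightarrow> 'x \<Rightarrow> 'y" where
  "ystar g x = (THE y. \<forall>y'. g (x, y) \<le> g (x, y'))"

definition hyperobj :: "('x \<times> 'y \<Rightarrow> real) \<Rightarrow> ('x \<times> 'y \<Rightarrow> real) \<Rightarrow> 'x \<Rightarrow> real" where
  "hyperobj f g x = f (x, ystar g x)"

definition grad :: "('a::real_inner \<Rightarrow> real) \<Rightarrow> 'a \<Rightarrow> 'a" where
  "grad h x = (THE v. (h has_derivative (\<lambda>d. v \<bullet> d)) (at x))"

definition Fop :: "((real^'n) \<times> (real^'m) \<Rightarrow> real^'n) \<Rightarrow> ((real^'n) \<times> (real^'m) \<Rightarrow> real^'m)
    \<Rightarrow> ((real^'n) \<times> (real^'m) \<Rightarrow> real^'n^'m) \<Rightarrow> ((real^'n) \<times> (real^'m) \<Rightarrow> real^'m^'m)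
    \<Rightarrow> (real^'n) \<times> (real^'m) \<Rightarrow> real^'n" where
  "Fop fx fy gyx gyy z = fx z - transpose (gyx z) *v (matrix_inv (gyy z) *v fy z)"

end

theory Submission
  imports Defs
begin



lemma inv_props:
  fixes A :: "real^'m::finite^'m"
  assumes mu: "\<mu> > 0" and lb: "\<And>v. \<mu> * norm v \<le> norm (A *v v)"
  shows "invertible A" "A ** matrix_inv A = mat 1" "matrix_inv A ** A = mat 1"
    "\<And>w. A *v (matrix_inv A *v w) = w"
    "\<And>w. norm (matrix_inv A *v w) \<le> norm w / \<mu>"
proof -
  have "\<forall>x. A *v x = 0 \<longrightarrow> x = 0"
  proof (intro allI impI)
    fix x assume "A *v x = 0"
    with lb[of x] have "\<mu> * norm x \<le> 0" by simp
    with mu show "x = 0" by (simp add: mult_le_0_iff)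
  qed
  then show inv: "invertible A"
    using matrix_left_invertible_ker invertible_left_inverse by blast
  then have "\<exists>A'. A ** A' = mat 1 \<and> A' ** A = mat 1" by (simp add: invertible_def)
  then have *: "A ** matrix_inv A = mat 1 \<and> matrix_inv A ** A = mat 1"
    unfolding matrix_inv_def by (rule someI_ex)
  then show r: "A ** matrix_inv A = mat 1" "matrix_inv A ** A = mat 1" by auto
  show AA: "\<And>w. A *v (matrix_inv A *v w) = w"
    by (simp add: matrix_vector_mul_assoc r)
  fix w
  have "\<mu> * norm (matrix_inv A *v w) \<le> norm w" using lb[of "matrix_inv A *v w"] AA by simp
  then show "norm (matrix_inv A *v w) \<le> norm w / \<mu>" using mu by (simp add: field_simps)
qed

lemma inner_mat: "(a::real^'m::finite) \<bullet> (M *v b) = (transpose M *v a) \<bullet> (b::real^'n::finite)"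
  by (simp add: dot_lmul_matrix)

lemma first_order:
  fixes \<phi> :: "real^'m::finite \<Rightarrow> real"
  assumes sc: "strongly_convex_on \<mu> UNIV \<phi>"
    and d: "(\<phi> has_derivative (\<lambda>h. G \<bullet> h)) (at a)"
  shows "\<phi> b \<ge> \<phi> a + G \<bullet> (b - a) + \<mu> / 2 * (norm (b - a))\<^sup>2"
proof -
  define \<psi> where "\<psi> = (\<lambda>\<theta>::real. \<phi> (a + \<theta> *\<^sub>R (b - a)))"
  have dl: "((\<lambda>\<theta>::real. a + \<theta> *\<^sub>R (b - a)) has_derivative (\<lambda>\<theta>. \<theta> *\<^sub>R (b - a))) (at 0)"
    by (auto intro!: derivative_eq_intros)
  have "(\<psi> has_derivative (\<lambda>\<theta>. G \<bullet> (\<theta> *\<^sub>R (b - a)))) (at 0)"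
    unfolding \<psi>_def by (rule has_derivative_compose[OF dl]) (simp add: d)
  then have "(\<psi> has_field_derivative (G \<bullet> (b - a))) (at 0)"
    unfolding has_field_derivative_def by (simp add: mult.commute[of _ "G \<bullet> (b - a)"])
  then have "((\<lambda>\<theta>. (\<psi> \<theta> - \<psi> 0) / (\<theta> - 0)) \<longlongrightarrow> G \<bullet> (b - a)) (at 0)"
    using has_field_derivative_iff by blast
  then have L: "((\<lambda>\<theta>. (\<psi> \<theta> - \<psi> 0) / \<theta>) \<longlongrightarrow> G \<bullet> (b - a)) (at_right 0)"
    by (simp add: filterlim_at_split)
  have R: "((\<lambda>\<theta>. \<phi> b - \<phi> a - \<mu> / 2 * (1 - \<theta>) * (norm (b - a))\<^sup>2) \<longlongrightarrow>
      \<phi> b - \<phi> a - \<mu> / 2 * (1 - 0) * (norm (b - a))\<^sup>2) (at_right (0::real))"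
    by (intro tendsto_intros)
  have E: "eventually (\<lambda>\<theta>. (\<psi> \<theta> - \<psi> 0) / \<theta> \<le> \<phi> b - \<phi> a - \<mu> / 2 * (1 - \<theta>) * (norm (b - a))\<^sup>2) (at_right (0::real))"
    unfolding eventually_at_right_field
  proof (intro exI[of _ 1] conjI allI impI)
    show "(1::real) > 0" by simp
  next
    fix \<theta> :: real assume th0: "0 < \<theta>" and th1: "\<theta> < 1"
    have th: "0 < \<theta> \<and> \<theta> < 1" using th0 th1 by simp
    have eq: "a + \<theta> *\<^sub>R (b - a) = \<theta> *\<^sub>R b + (1 - \<theta>) *\<^sub>R a" by (simp add: algebra_simps)
    have "\<phi> (\<theta> *\<^sub>R b + (1 - \<theta>) *\<^sub>R a) \<le> \<theta> * \<phi> b + (1 - \<theta>) * \<phi> a - \<mu> / 2 * \<theta> * (1 - \<theta>) * (norm (b - a))\<^sup>2"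
      using sc th unfolding strongly_convex_on_def by auto
    then have "\<psi> \<theta> - \<psi> 0 \<le> \<theta> * (\<phi> b - \<phi> a - \<mu> / 2 * (1 - \<theta>) * (norm (b - a))\<^sup>2)"
      unfolding \<psi>_def eq by (simp add: algebra_simps)
    then show "(\<psi> \<theta> - \<psi> 0) / \<theta> \<le> \<phi> b - \<phi> a - \<mu> / 2 * (1 - \<theta>) * (norm (b - a))\<^sup>2"
      using th by (simp add: divide_simps mult.commute)
  qed
  have "G \<bullet> (b - a) \<le> \<phi> b - \<phi> a - \<mu> / 2 * (1 - 0) * (norm (b - a))\<^sup>2"
    using tendsto_le[OF trivial_limit_at_right_real R L E] .
  then show ?thesis by simp
qed



locale bl =
  fixes g :: "(real^'n::finite) \<times> (real^'m::finite) \<Rightarrow> real"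
    and gx :: "(real^'n) \<times> (real^'m) \<Rightarrow> real^'n"
    and gy :: "(real^'n) \<times> (real^'m) \<Rightarrow> real^'m"
    and gyx :: "(real^'n) \<times> (real^'m) \<Rightarrow> real^'n^'m"
    and gyy :: "(real^'n) \<times> (real^'m) \<Rightarrow> real^'m^'m"
    and \<mu>g Lgyx :: real
  assumes g_deriv: "\<And>z. (g has_derivative (\<lambda>(dx, dy). gx z \<bullet> dx + gy z \<bullet> dy)) (at z)"
    and gy_deriv: "\<And>z. (gy has_derivative (\<lambda>(dx, dy). gyx z *v dx + gyy z *v dy)) (at z)"
    and mu_pos: "\<mu>g > 0"
    and g_sc: "\<And>u. strongly_convex_on \<mu>g UNIV (\<lambda>v. g (u, v))"
    and gy_lip_x: "\<And>v. Lgyx-lipschitz_on UNIV (\<lambda>u. gy (u, v))"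
begin

lemma pd_g: "((\<lambda>v. g (u, v)) has_derivative (\<lambda>d. gy (u, v) \<bullet> d)) (at v)"
proof -
  have "((\<lambda>v. (u, v)) has_derivative (\<lambda>d. (0, d))) (at v)"
    by (auto intro!: derivative_eq_intros)
  from has_derivative_compose[OF this g_deriv[of "(u, v)"]] show ?thesis by simp
qed

lemma pd_gy: "((\<lambda>v. gy (u, v)) has_derivative (\<lambda>d. gyy (u, v) *v d)) (at v)"
proof -
  have "((\<lambda>v. (u, v)) has_derivative (\<lambda>d. (0, d))) (at v)"
    by (auto intro!: derivative_eq_intros)
  from has_derivative_compose[OF this gy_deriv[of "(u, v)"]] show ?thesis
    by (simp add: matrix_vector_mult_0_right)
qed

lemma fo: "g (u, b) \<ge> g (u, a) + gy (u, a) \<bullet> (b - a) + \<mu>g / 2 * (norm (b - a))\<^sup>2"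
  using first_order[OF g_sc pd_g] .

lemma smono: "\<mu>g * (norm (a - b))\<^sup>2 \<le> (gy (u, a) - gy (u, b)) \<bullet> (a - b)"
proof -
  have 1: "g (u, b) \<ge> g (u, a) + gy (u, a) \<bullet> (b - a) + \<mu>g / 2 * (norm (b - a))\<^sup>2" by (rule fo)
  have 2: "g (u, a) \<ge> g (u, b) + gy (u, b) \<bullet> (a - b) + \<mu>g / 2 * (norm (a - b))\<^sup>2" by (rule fo)
  have "norm (b - a) = norm (a - b)" by (rule norm_minus_commute)
  moreover have "gy (u, a) \<bullet> (b - a) = - (gy (u, a) \<bullet> (a - b))"
    by (metis inner_minus_right minus_diff_eq)
  ultimately show ?thesis using 1 2 by (simp add: inner_diff_left)
qed

lemma hess_lb: "\<mu>g * norm v \<le> norm (gyy z *v v)"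
proof -
  obtain u a where z: "z = (u, a)" by (cases z)
  define \<rho> where "\<rho> = (\<lambda>t::real. gy (u, a + t *\<^sub>R v) \<bullet> v)"
  have dl: "((\<lambda>t::real. a + t *\<^sub>R v) has_derivative (\<lambda>t. t *\<^sub>R v)) (at 0)"
    by (auto intro!: derivative_eq_intros)
  have "((\<lambda>t. gy (u, a + t *\<^sub>R v)) has_derivative (\<lambda>t. gyy (u, a) *v (t *\<^sub>R v))) (at 0)"
    by (rule has_derivative_compose[OF dl]) (simp add: pd_gy)
  then have "(\<rho> has_derivative (\<lambda>t. (gyy (u, a) *v (t *\<^sub>R v)) \<bullet> v)) (at 0)"
    unfolding \<rho>_def by (auto intro!: derivative_eq_intros)
  then have "(\<rho> has_field_derivative ((gyy (u, a) *v v) \<bullet> v)) (at 0)"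
    unfolding has_field_derivative_def
    by (simp add: mult.commute[of _ "(gyy (u, a) *v v) \<bullet> v"] matrix_vector_mult_scaleR)
  then have "((\<lambda>t. (\<rho> t - \<rho> 0) / (t - 0)) \<longlongrightarrow> (gyy (u, a) *v v) \<bullet> v) (at 0)"
    using has_field_derivative_iff by blast
  then have L: "((\<lambda>t. (\<rho> t - \<rho> 0) / t) \<longlongrightarrow> (gyy (u, a) *v v) \<bullet> v) (at_right 0)"
    by (simp add: filterlim_at_split)
  have E: "eventually (\<lambda>t. \<mu>g * (norm v)\<^sup>2 \<le> (\<rho> t - \<rho> 0) / t) (at_right (0::real))"
    unfolding eventually_at_right_field
  proof (intro exI[of _ 1] conjI allI impI)
    show "(1::real) > 0" by simp
  next
    fix t :: real assume t0: "0 < t" and t1: "t < 1"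
    have "\<mu>g * (norm ((a + t *\<^sub>R v) - a))\<^sup>2 \<le> (gy (u, a + t *\<^sub>R v) - gy (u, a)) \<bullet> ((a + t *\<^sub>R v) - a)"
      by (rule smono)
    then have "\<mu>g * (t\<^sup>2 * (norm v)\<^sup>2) \<le> t * (\<rho> t - \<rho> 0)"
      using t0 by (simp add: \<rho>_def inner_diff_left power_mult_distrib algebra_simps)
    then have "t * (\<mu>g * (norm v)\<^sup>2 * t) \<le> t * (\<rho> t - \<rho> 0)"
      by (simp add: power2_eq_square mult_ac)
    then have "\<mu>g * (norm v)\<^sup>2 * t \<le> \<rho> t - \<rho> 0"
      using t0 by (simp add: mult_le_cancel_left_pos)
    then show "\<mu>g * (norm v)\<^sup>2 \<le> (\<rho> t - \<rho> 0) / t"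
      by (simp add: pos_le_divide_eq[OF t0])
  qed
  have "\<mu>g * (norm v)\<^sup>2 \<le> (gyy (u, a) *v v) \<bullet> v"
    using tendsto_lowerbound[OF L E trivial_limit_at_right_real] .
  also have "\<dots> \<le> norm (gyy (u, a) *v v) * norm v"
    using Cauchy_Schwarz_ineq2 by (metis abs_le_D1 norm_cauchy_schwarz)
  finally have *: "\<mu>g * (norm v)\<^sup>2 \<le> norm (gyy (u, a) *v v) * norm v" .
  show ?thesis
  proof (cases "v = 0")
    case True then show ?thesis by simp
  next
    case False
    then have "norm v > 0" by simp
    with * show ?thesis unfolding z by (simp add: power2_eq_square)
  qed
qed

lemmas gyy_inv = inv_props[OF mu_pos hess_lb]

end


context bl begin

lemma min_exists: "\<exists>y. \<forall>y'. g (u, y) \<le> g (u, y')"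
proof -
  define G0 where "G0 = gy (u, 0)"
  define R where "R = 2 * norm G0 / \<mu>g + 1"
  have cont: "continuous_on (cball 0 R) (\<lambda>v. g (u, v))"
    by (intro continuous_at_imp_continuous_on ballI has_derivative_continuous[OF pd_g])
  have "R > 0" unfolding R_def using mu_pos by (simp add: add_nonneg_pos)
  then obtain y where yK: "y \<in> cball 0 R" and ymin: "\<forall>x\<in>cball 0 R. g (u, y) \<le> g (u, x)"
    using continuous_attains_inf[OF compact_cball _ cont] by (metis centre_in_cball less_imp_le empty_iff)
  have "\<forall>y'. g (u, y) \<le> g (u, y')"
  proof
    fix y'
    show "g (u, y) \<le> g (u, y')"
    proof (cases "y' \<in> cball 0 R")
      case True then show ?thesis using ymin by blast
    next
      case False
      then have nb: "norm y' > R" by (simp add: dist_norm)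
      have f: "g (u, y') \<ge> g (u, 0) + G0 \<bullet> (y' - 0) + \<mu>g / 2 * (norm (y' - 0))\<^sup>2"
        unfolding G0_def by (rule fo)
      have "G0 \<bullet> y' \<ge> - (norm G0 * norm y')"
        using norm_cauchy_schwarz[of "-G0" y'] by simp
      moreover have "norm G0 * norm y' \<le> \<mu>g / 2 * (norm y')\<^sup>2"
      proof -
        have "2 * norm G0 / \<mu>g \<le> norm y'" using nb unfolding R_def by simp
        then have "2 * norm G0 \<le> \<mu>g * norm y'" using mu_pos by (simp add: field_simps)
        then have "norm G0 * norm y' \<le> (\<mu>g * norm y' / 2) * norm y'"
          by (intro mult_right_mono) auto
        then show ?thesis by (simp add: power2_eq_square)
      qed
      ultimately have "g (u, y') \<ge> g (u, 0)" using f by simp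
      moreover have "g (u, y) \<le> g (u, 0)" using ymin \<open>R > 0\<close> by simp
      ultimately show ?thesis by simp
    qed
  qed
  then show ?thesis by blast
qed

lemma min_unique:
  assumes "\<forall>y'. g (u, a) \<le> g (u, y')" "\<forall>y'. g (u, b) \<le> g (u, y')"
  shows "a = b"
proof -
  have eq: "g (u, a) = g (u, b)" using assms by (meson order_antisym)
  have "g (u, (1/2) *\<^sub>R a + (1 - 1/2) *\<^sub>R b) \<le> 1/2 * g (u, a) + (1 - 1/2) * g (u, b)
      - \<mu>g / 2 * (1/2) * (1 - 1/2) * (norm (a - b))\<^sup>2"
    using g_sc[of u] unfolding strongly_convex_on_def
    by (elim conjE, erule_tac x=a in ballE, erule_tac x=b in ballE, erule_tac x="1/2" in allE) auto
  moreover have "g (u, a) \<le> g (u, (1/2) *\<^sub>R a + (1 - 1/2) *\<^sub>R b)" using assms by blast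
  ultimately have "\<mu>g * (norm (a - b))\<^sup>2 \<le> 0" using eq by simp
  then have "(norm (a - b))\<^sup>2 \<le> 0" using mu_pos by (simp add: mult_le_0_iff)
  then show ?thesis by simp
qed

lemma ystar_min: "g (u, ystar g u) \<le> g (u, y')"
proof -
  have "\<exists>!y. \<forall>y'. g (u, y) \<le> g (u, y')"
    using min_exists min_unique by blast
  then have "\<forall>y'. g (u, ystar g u) \<le> g (u, y')"
    unfolding ystar_def by (rule theI')
  then show ?thesis by blast
qed

lemma ystar_grad: "gy (u, ystar g u) = 0"
proof -
  have "(\<lambda>d. gy (u, ystar g u) \<bullet> d) = (\<lambda>v. 0)"
    by (rule differential_zero_maxmin[OF UNIV_I open_UNIV pd_g]) (use ystar_min in blast)
  then have "gy (u, ystar g u) \<bullet> gy (u, ystar g u) = 0" by metis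
  then show ?thesis by simp
qed

lemma dist_ystar: "norm (v - ystar g u) \<le> norm (gy (u, v)) / \<mu>g"
proof -
  have "\<mu>g * (norm (v - ystar g u))\<^sup>2 \<le> (gy (u, v) - gy (u, ystar g u)) \<bullet> (v - ystar g u)"
    by (rule smono)
  also have "\<dots> \<le> norm (gy (u, v)) * norm (v - ystar g u)"
    using ystar_grad norm_cauchy_schwarz by simp
  finally have *: "\<mu>g * (norm (v - ystar g u))\<^sup>2 \<le> norm (gy (u, v)) * norm (v - ystar g u)" .
  show ?thesis
  proof (cases "v = ystar g u")
    case True then show ?thesis using mu_pos by simp
  next
    case False
    then have "norm (v - ystar g u) > 0" by simp
    with * have "\<mu>g * norm (v - ystar g u) \<le> norm (gy (u, v))" by (simp add: power2_eq_square)
    then show ?thesis using mu_pos by (simp add: field_simps)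
  qed
qed

lemma ystar_lip: "norm (ystar g u' - ystar g u) \<le> Lgyx / \<mu>g * norm (u' - u)"
proof -
  have "norm (ystar g u' - ystar g u) \<le> norm (gy (u, ystar g u')) / \<mu>g" by (rule dist_ystar)
  also have "gy (u, ystar g u') = gy (u, ystar g u') - gy (u', ystar g u')"
    using ystar_grad by simp
  also have "norm \<dots> \<le> Lgyx * norm (u' - u)"
    using gy_lip_x[of "ystar g u'"] unfolding lipschitz_on_def
    by (metis UNIV_I dist_norm norm_minus_commute)
  finally show ?thesis using mu_pos by (simp add: divide_right_mono)
qed

lemma Lgyx_nonneg: "Lgyx \<ge> 0"
  using gy_lip_x unfolding lipschitz_on_def by blast

end


context bl begin

definition "Kd u = (\<lambda>h. - (matrix_inv (gyy (u, ystar g u)) *v (gyx (u, ystar g u) *v h)))"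

lemma ystar_deriv: "(ystar g has_derivative Kd u) (at u)"
proof -
  define y0 where "y0 = ystar g u"
  define A where "A = gyy (u, y0)"
  define B where "B = gyx (u, y0)"
  define Ai where "Ai = matrix_inv A"
  define c where "c = 1 + Lgyx / \<mu>g"
  have c_pos: "c > 0" unfolding c_def using mu_pos Lgyx_nonneg by (simp add: add_pos_nonneg)
  have K: "Kd u = (\<lambda>h. - (Ai *v (B *v h)))" unfolding Kd_def Ai_def A_def B_def y0_def by simp
  have AiA: "\<And>k. Ai *v (A *v k) = k"
    unfolding Ai_def A_def by (simp add: matrix_vector_mul_assoc gyy_inv(3))
  have Ainb: "\<And>w. norm (Ai *v w) \<le> norm w / \<mu>g" unfolding Ai_def A_def by (rule gyy_inv(5))
  have bl: "bounded_linear (\<lambda>h. - (Ai *v (B *v h)))"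
    by (intro bounded_linear_minus bounded_linear_compose[OF matrix_vector_mul_bounded_linear]
        matrix_vector_mul_bounded_linear)
  have gd: "\<forall>e>0. \<exists>d>0. \<forall>z. norm (z - (u, y0)) < d \<longrightarrow>
      norm (gy z - gy (u, y0) - (\<lambda>(dx, dy). B *v dx + A *v dy) (z - (u, y0))) \<le> e * norm (z - (u, y0))"
    using gy_deriv[of "(u, y0)"] unfolding has_derivative_at_alt A_def B_def by blast
  have "\<forall>e>0. \<exists>d>0. \<forall>u'. norm (u' - u) < d \<longrightarrow>
      norm (ystar g u' - ystar g u - (\<lambda>h. - (Ai *v (B *v h))) (u' - u)) \<le> e * norm (u' - u)"
  proof (intro allI impI)
    fix e :: real assume e: "e > 0"
    then have "e * \<mu>g / c > 0" using mu_pos c_pos by simp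
    then obtain d' where d': "d' > 0" and hd: "\<And>z. norm (z - (u, y0)) < d' \<Longrightarrow>
      norm (gy z - gy (u, y0) - (\<lambda>(dx, dy). B *v dx + A *v dy) (z - (u, y0))) \<le> e * \<mu>g / c * norm (z - (u, y0))"
      using gd by blast
    show "\<exists>d>0. \<forall>u'. norm (u' - u) < d \<longrightarrow>
      norm (ystar g u' - ystar g u - (\<lambda>h. - (Ai *v (B *v h))) (u' - u)) \<le> e * norm (u' - u)"
    proof (intro exI[of _ "d' / c"] conjI allI impI)
      show "d' / c > 0" using d' c_pos by simp
      fix u' assume u': "norm (u' - u) < d' / c"
      define h where "h = u' - u"
      define k where "k = ystar g u' - y0"
      have kb: "norm k \<le> Lgyx / \<mu>g * norm h" unfolding k_def h_def y0_def by (rule ystar_lip)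
      have zd: "(u', ystar g u') - (u, y0) = (h, k)" unfolding h_def k_def by simp
      have nhk: "norm (h, k) \<le> c * norm h"
        using norm_Pair_le[of h k] kb unfolding c_def by (simp add: algebra_simps)
      have "c * norm h < d'" using u' c_pos unfolding h_def by (simp add: field_simps)
      then have "norm ((u', ystar g u') - (u, y0)) < d'" using nhk zd by simp
      from hd[OF this] have "norm (0 - 0 - (B *v h + A *v k)) \<le> e * \<mu>g / c * norm (h, k)"
        using ystar_grad[of u'] ystar_grad[of u] unfolding zd y0_def by (simp add: h_def k_def y0_def)
      also have "\<dots> \<le> e * \<mu>g / c * (c * norm h)"
        using nhk e mu_pos c_pos by (intro mult_left_mono) auto
      also have "\<dots> = e * \<mu>g * norm h" using c_pos by simp
      finally have 0: "norm (- (A *v k) - B *v h) \<le> e * \<mu>g * norm h" by (simp add: algebra_simps)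
      have "A *v k + B *v h = - (- (A *v k) - B *v h)" by simp
      then have 1: "norm (A *v k + B *v h) \<le> e * \<mu>g * norm h" using 0 by (metis norm_minus_cancel)
      have "ystar g u' - ystar g u - (- (Ai *v (B *v h))) = Ai *v (A *v k + B *v h)"
        by (simp add: matrix_vector_right_distrib AiA k_def y0_def)
      then have "norm (ystar g u' - ystar g u - (- (Ai *v (B *v h)))) \<le> norm (A *v k + B *v h) / \<mu>g"
        using Ainb by simp
      also have "\<dots> \<le> e * norm h" using 1 mu_pos by (simp add: field_simps)
      finally show "norm (ystar g u' - ystar g u - (\<lambda>h. - (Ai *v (B *v h))) (u' - u)) \<le> e * norm (u' - u)"
        unfolding h_def by simp
    qed
  qed
  then show ?thesis unfolding K has_derivative_at_alt using bl by blast
qed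

end


lemma cont_mv:
  fixes A :: "'a::topological_space \<Rightarrow> real^'n::finite^'m::finite"
  assumes "continuous_on S A" "continuous_on S x"
  shows "continuous_on S (\<lambda>s. A s *v x s)"
  unfolding matrix_vector_mult_def
  by (intro continuous_intros continuous_on_vec_lambda continuous_on_sum continuous_on_mult
      assms[THEN continuous_on_compose2[OF continuous_on_component]]) auto

lemma cont_tmv:
  fixes A :: "'a::topological_space \<Rightarrow> real^'n::finite^'m::finite"
  assumes "continuous_on S A" "continuous_on S x"
  shows "continuous_on S (\<lambda>s. transpose (A s) *v x s)"
  unfolding transpose_matrix_vector vector_matrix_mult_def
  by (intro continuous_intros continuous_on_vec_lambda continuous_on_sum continuous_on_mult
      assms[THEN continuous_on_compose2[OF continuous_on_component]]) auto



lemma cont_inv: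
  fixes A :: "'a::topological_space \<Rightarrow> real^'m::finite^'m"
  assumes cA: "continuous_on S A" and cw: "continuous_on S w" and mu: "\<mu> > 0"
    and lb: "\<And>s v. s \<in> S \<Longrightarrow> \<mu> * norm v \<le> norm (A s *v v)"
  shows "continuous_on S (\<lambda>s. matrix_inv (A s) *v w s)"
  unfolding continuous_on_def
proof
  fix s0 assume s0: "s0 \<in> S"
  define q0 where "q0 = matrix_inv (A s0) *v w s0"
  have w0: "A s0 *v q0 = w s0" unfolding q0_def using inv_props(4)[OF mu lb[OF s0]] .
  have c1: "continuous_on S (\<lambda>s. w s - A s *v q0)"
    by (intro continuous_intros cw cont_mv cA)
  then have t1: "((\<lambda>s. w s - A s *v q0) \<longlongrightarrow> 0) (at s0 within S)"
    using s0 w0 unfolding continuous_on_def by fastforce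
  have t2: "((\<lambda>s. norm (w s - A s *v q0) / \<mu>) \<longlongrightarrow> 0) (at s0 within S)"
    using tendsto_divide[OF tendsto_norm_zero[OF t1] tendsto_const[of \<mu>]] using mu by simp
  have ev: "eventually (\<lambda>s. norm (matrix_inv (A s) *v w s - q0) \<le> norm (w s - A s *v q0) / \<mu>) (at s0 within S)"
    unfolding eventually_at_filter
  proof (intro always_eventually allI impI)
    fix s assume "s \<noteq> s0" "s \<in> S"
    note P = inv_props[OF mu lb[OF \<open>s \<in> S\<close>]]
    have "matrix_inv (A s) *v (A s *v q0) = q0"
      by (simp add: matrix_vector_mul_assoc P(3))
    then have "matrix_inv (A s) *v w s - q0 = matrix_inv (A s) *v (w s - A s *v q0)"
      by (simp add: matrix_vector_mult_diff_distrib)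
    then show "norm (matrix_inv (A s) *v w s - q0) \<le> norm (w s - A s *v q0) / \<mu>"
      using P(5) by simp
  qed
  have "((\<lambda>s. matrix_inv (A s) *v w s - q0) \<longlongrightarrow> 0) (at s0 within S)"
    by (rule Lim_null_comparison[OF ev t2])
  then show "((\<lambda>s. matrix_inv (A s) *v w s) \<longlongrightarrow> matrix_inv (A s0) *v w s0) (at s0 within S)"
    unfolding q0_def by (simp add: LIM_zero_iff)
qed



locale bl2 = bl g gx gy gyx gyy \<mu>g Lgyx
  for g :: "(real^'n::finite) \<times> (real^'m::finite) \<Rightarrow> real"
    and gx :: "(real^'n) \<times> (real^'m) \<Rightarrow> real^'n"
    and gy :: "(real^'n) \<times> (real^'m) \<Rightarrow> real^'m"
    and gyx :: "(real^'n) \<times> (real^'m) \<Rightarrow> real^'n^'m"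
    and gyy :: "(real^'n) \<times> (real^'m) \<Rightarrow> real^'m^'m"
    and \<mu>g Lgyx :: real +
  fixes f :: "(real^'n) \<times> (real^'m) \<Rightarrow> real"
    and fx :: "(real^'n) \<times> (real^'m) \<Rightarrow> real^'n"
    and fy :: "(real^'n) \<times> (real^'m) \<Rightarrow> real^'m"
    and M1 :: real
  assumes f_deriv: "\<And>z. (f has_derivative (\<lambda>(dx, dy). fx z \<bullet> dx + fy z \<bullet> dy)) (at z)"
    and fx_cont: "continuous_on UNIV fx" and fy_cont: "continuous_on UNIV fy"
    and gyx_cont: "continuous_on UNIV gyx" and gyy_cont: "continuous_on UNIV gyy"
    and M1_bound: "\<And>u v. norm (grad (hyperobj f g) u - Fop fx fy gyx gyy (u, v))
                          \<le> M1 * norm (v - ystar g u)"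
begin

definition "Dv u = fx (u, ystar g u) - transpose (gyx (u, ystar g u)) *v
   (transpose (matrix_inv (gyy (u, ystar g u))) *v fy (u, ystar g u))"

lemma hyp_deriv: "(hyperobj f g has_derivative (\<lambda>h. Dv u \<bullet> h)) (at u)"
proof -
  define z0 where "z0 = (u, ystar g u)"
  have p: "((\<lambda>u. (u, ystar g u)) has_derivative (\<lambda>h. (h, Kd u h))) (at u)"
    by (intro has_derivative_Pair has_derivative_ident ystar_deriv)
  have "((\<lambda>u. f (u, ystar g u)) has_derivative
      (\<lambda>h. (\<lambda>(dx, dy). fx z0 \<bullet> dx + fy z0 \<bullet> dy) (h, Kd u h))) (at u)"
    unfolding z0_def by (rule has_derivative_compose[OF p f_deriv])
  moreover have "(\<lambda>h. (\<lambda>(dx, dy). fx z0 \<bullet> dx + fy z0 \<bullet> dy) (h, Kd u h)) = (\<lambda>h. Dv u \<bullet> h)"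
  proof
    fix h
    have "fy z0 \<bullet> Kd u h = - ((transpose (gyx z0) *v
      (transpose (matrix_inv (gyy z0)) *v fy z0)) \<bullet> h)"
      unfolding Kd_def z0_def by (simp add: dot_lmul_matrix)
    then show "(\<lambda>(dx, dy). fx z0 \<bullet> dx + fy z0 \<bullet> dy) (h, Kd u h) = Dv u \<bullet> h"
      unfolding Dv_def z0_def by (simp add: inner_diff_left)
  qed
  ultimately show ?thesis unfolding hyperobj_def by simp
qed

lemma grad_eq: "grad (hyperobj f g) u = Dv u"
  unfolding grad_def
proof (rule the_equality)
  show "(hyperobj f g has_derivative (\<bullet>) (Dv u)) (at u)" using hyp_deriv by simp
next
  fix v assume "(hyperobj f g has_derivative (\<bullet>) v) (at u)"
  then have "(\<lambda>d. v \<bullet> d) = (\<lambda>d. Dv u \<bullet> d)"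
    using has_derivative_unique hyp_deriv by blast
  then have "v \<bullet> (v - Dv u) = Dv u \<bullet> (v - Dv u)" by metis
  then have "(v - Dv u) \<bullet> (v - Dv u) = 0" by (simp add: inner_diff_left)
  then show "v = Dv u" by simp
qed

lemma grad_F: "grad (hyperobj f g) u = Fop fx fy gyx gyy (u, ystar g u)"
  using M1_bound[of u "ystar g u"] by simp

lemma grad_cont: "continuous_on UNIV (grad (hyperobj f g))"
proof -
  have cy: "continuous_on UNIV (ystar g)"
    by (intro continuous_at_imp_continuous_on ballI has_derivative_continuous[OF ystar_deriv])
  have cz: "continuous_on UNIV (\<lambda>u. (u, ystar g u))"
    by (intro continuous_intros cy)
  have c1: "\<And>h :: _ \<Rightarrow> 'b::topological_space. continuous_on UNIV h \<Longrightarrow> continuous_on UNIV (\<lambda>u. h (u, ystar g u))"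
    by (rule continuous_on_compose2[OF _ cz]) auto
  have "continuous_on UNIV (\<lambda>u. Fop fx fy gyx gyy (u, ystar g u))"
    unfolding Fop_def
    by (intro continuous_intros cont_tmv cont_inv[OF _ _ mu_pos] c1 fx_cont fy_cont gyx_cont gyy_cont hess_lb)
  then show ?thesis using grad_F by simp
qed

end


lemma mv_neg: "(A::real^'n::finite^'m::finite) *v (- v) = - (A *v v)"
  by (simp add: matrix_vector_mult_def vec_eq_iff sum_negf)

lemma chain_vd:
  assumes "(z has_vector_derivative z') (at s within S)" "(h has_derivative D) (at (z s))"
  shows "((\<lambda>r. h (z r)) has_vector_derivative D z') (at s within S)"
proof -
  have 1: "((\<lambda>r. h (z r)) has_derivative (\<lambda>r. D (r *\<^sub>R z'))) (at s within S)"
    using has_derivative_compose[OF assms(1)[unfolded has_vector_derivative_def] assms(2)] .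
  have "linear D" using assms(2) has_derivative_linear by blast
  then have "(\<lambda>r. D (r *\<^sub>R z')) = (\<lambda>r. r *\<^sub>R D z')" by (simp add: linear_scale)
  then show ?thesis using 1 unfolding has_vector_derivative_def by simp
qed



theorem theorem3:
  fixes f g :: "(real^('n::finite)) \<times> (real^('m::finite)) \<Rightarrow> real"
    and fx gx :: "(real^'n) \<times> (real^'m) \<Rightarrow> real^'n"
    and fy gy :: "(real^'n) \<times> (real^'m) \<Rightarrow> real^'m"
    and gxx :: "(real^'n) \<times> (real^'m) \<Rightarrow> real^'n^'n"
    and gxy :: "(real^'n) \<times> (real^'m) \<Rightarrow> real^'m^'n"
    and gyx :: "(real^'n) \<times> (real^'m) \<Rightarrow> real^'n^'m"
    and gyy :: "(real^'n) \<times> (real^'m) \<Rightarrow> real^'m^'m"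
    and Cfx Cfy \<mu>g Lgyy Lgyx M1 \<beta> :: real
    and x :: "real \<Rightarrow> real^'n" and y :: "real \<Rightarrow> real^'m"
    and xs :: "real^'n" and t :: real
  assumes
    \<comment> \<open>A1\<close>
    f_deriv: "\<And>z. (f has_derivative (\<lambda>(dx, dy). fx z \<bullet> dx + fy z \<bullet> dy)) (at z)"
    and fx_cont: "continuous_on UNIV fx" and fy_cont: "continuous_on UNIV fy"
    and fx_bnd: "\<And>z. norm (fx z) \<le> Cfx" and fy_bnd: "\<And>z. norm (fy z) \<le> Cfy"
    and fx_lip: "\<exists>L. L-lipschitz_on UNIV fx" and fy_lip: "\<exists>L. L-lipschitz_on UNIV fy"
    \<comment> \<open>A2\<close>
    and g_deriv: "\<And>z. (g has_derivative (\<lambda>(dx, dy). gx z \<bullet> dx + gy z \<bullet> dy)) (at z)"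
    and gx_deriv: "\<And>z. (gx has_derivative (\<lambda>(dx, dy). gxx z *v dx + gxy z *v dy)) (at z)"
    and gy_deriv: "\<And>z. (gy has_derivative (\<lambda>(dx, dy). gyx z *v dx + gyy z *v dy)) (at z)"
    and gxx_cont: "continuous_on UNIV gxx" and gxy_cont: "continuous_on UNIV gxy"
    and gyx_cont: "continuous_on UNIV gyx" and gyy_cont: "continuous_on UNIV gyy"
    and mu_pos: "\<mu>g > 0"
    and g_sc: "\<And>u. strongly_convex_on \<mu>g UNIV (\<lambda>v. g (u, v))"
    and gy_lip_y: "\<And>u. Lgyy-lipschitz_on UNIV (\<lambda>v. gy (u, v))"
    and gy_lip_x: "\<And>v. Lgyx-lipschitz_on UNIV (\<lambda>u. gy (u, v))"
    and gyx_lip: "\<exists>L. L-lipschitz_on UNIV gyx" and gyy_lip: "\<exists>L. L-lipschitz_on UNIV gyy"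
    \<comment> \<open>the constant M1\<close>
    and M1_pos: "M1 > 0"
    and M1_bound: "\<And>u v. norm (grad (hyperobj f g) u - Fop fx fy gyx gyy (u, v))
                          \<le> M1 * norm (v - ystar g u)"
    \<comment> \<open>the prediction-correction dynamics on [0, \<infinity>)\<close>
    and beta_pos: "\<beta> > 0"
    and x_ode: "\<And>s. s \<ge> 0 \<Longrightarrow>
        (x has_vector_derivative - Fop fx fy gyx gyy (x s, y s)) (at s within {0..})"
    and y_ode: "\<And>s. s \<ge> 0 \<Longrightarrow>
        (y has_vector_derivative
           - (matrix_inv (gyy (x s, y s)) *v
               (\<beta> *\<^sub>R gy (x s, y s) + gyx (x s, y s) *v (- Fop fx fy gyx gyy (x s, y s)))))
        (at s within {0..})"
    \<comment> \<open>global minimizer of l\<close>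
    and xs_min: "\<And>u. hyperobj f g xs \<le> hyperobj f g u"
    and t_pos: "t > 0"
  shows "(\<lambda>\<tau>. (norm (grad (hyperobj f g) (x \<tau>)))\<^sup>2) integrable_on {0..t} \<and>
         1 / (2 * t) * integral {0..t} (\<lambda>\<tau>. (norm (grad (hyperobj f g) (x \<tau>)))\<^sup>2)
         \<le> 1 / t * (hyperobj f g (x 0) - hyperobj f g xs
               + M1\<^sup>2 / (4 * \<beta> * \<mu>g\<^sup>2) * (norm (gy (x 0, y 0)))\<^sup>2)"
proof -
  interpret bl2 g gx gy gyx gyy \<mu>g Lgyx f fx fy M1
    by unfold_locales (fact g_deriv gy_deriv mu_pos g_sc gy_lip_x f_deriv fx_cont fy_cont
        gyx_cont gyy_cont M1_bound)+
  define hl where "hl = hyperobj f g"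
  define Fz where "Fz = (\<lambda>s. Fop fx fy gyx gyy (x s, y s))"
  define G where "G = (\<lambda>s. gy (x s, y s))"
  define x' where "x' = (\<lambda>s. - Fz s)"
  define y' where "y' = (\<lambda>s. - (matrix_inv (gyy (x s, y s)) *v (\<beta> *\<^sub>R G s + gyx (x s, y s) *v x' s)))"
  have xd: "\<And>s. s \<ge> 0 \<Longrightarrow> (x has_vector_derivative x' s) (at s within {0..})"
    using x_ode unfolding x'_def Fz_def by blast
  have yd: "\<And>s. s \<ge> 0 \<Longrightarrow> (y has_vector_derivative y' s) (at s within {0..})"
    using y_ode unfolding y'_def x'_def Fz_def G_def by blast
  have Gd: "(G has_vector_derivative (- \<beta> *\<^sub>R G s)) (at s within {0..})" if s: "s \<ge> 0" for s
  proof -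
    have zd: "((\<lambda>r. (x r, y r)) has_vector_derivative (x' s, y' s)) (at s within {0..})"
      by (intro has_vector_derivative_Pair xd yd s)
    have "(G has_vector_derivative (\<lambda>(dx, dy). gyx (x s, y s) *v dx + gyy (x s, y s) *v dy) (x' s, y' s))
        (at s within {0..})"
      unfolding G_def by (rule chain_vd[OF zd gy_deriv])
    moreover have "gyy (x s, y s) *v y' s = - (\<beta> *\<^sub>R G s + gyx (x s, y s) *v x' s)"
      unfolding y'_def by (simp add: mv_neg gyy_inv(4))
    ultimately show ?thesis by simp
  qed
  have Gexp: "G s = exp (- \<beta> * s) *\<^sub>R G 0" if s: "s \<ge> 0" for s
  proof -
    have "\<exists>c. \<forall>r\<in>{0..}. exp (\<beta> * r) *\<^sub>R G r = c"
    proof (rule has_derivative_zero_constant)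
      show "convex {0::real..}" by (rule convex_real_interval)
      fix r :: real assume r: "r \<in> {0..}"
      have e: "((\<lambda>r. exp (\<beta> * r)) has_real_derivative (\<beta> * exp (\<beta> * r))) (at r within {0..})"
        by (auto intro!: derivative_eq_intros)
      have "((\<lambda>r. exp (\<beta> * r) *\<^sub>R G r) has_vector_derivative
          (exp (\<beta> * r) *\<^sub>R (- \<beta> *\<^sub>R G r) + (\<beta> * exp (\<beta> * r)) *\<^sub>R G r)) (at r within {0..})"
        using has_vector_derivative_scaleR[OF e Gd[of r]] r by simp
      then show "((\<lambda>r. exp (\<beta> * r) *\<^sub>R G r) has_derivative (\<lambda>h. 0)) (at r within {0..})"
        unfolding has_vector_derivative_def by (simp add: algebra_simps)
    qed
    then obtain c where c: "\<And>r. r \<ge> 0 \<Longrightarrow> exp (\<beta> * r) *\<^sub>R G r = c" by auto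
    have "G 0 = c" using c[of 0] by simp
    then have "exp (\<beta> * s) *\<^sub>R G s = G 0" using c[OF s] by simp
    then have "exp (- \<beta> * s) *\<^sub>R (exp (\<beta> * s) *\<^sub>R G s) = exp (- \<beta> * s) *\<^sub>R G 0" by simp
    then show ?thesis by (simp add: exp_minus field_simps)
  qed
  have Gn: "norm (G s) = exp (- \<beta> * s) * norm (G 0)" if "s \<ge> 0" for s
    using Gexp[OF that] by simp
  define a where "a = (\<lambda>s. grad hl (x s))"
  have Phid: "((\<lambda>s. hl (x s)) has_vector_derivative (- (a s \<bullet> Fz s))) (at s within {0..t})"
    if s: "s \<in> {0..t}" for s
  proof -
    have "((\<lambda>s. hl (x s)) has_vector_derivative (a s \<bullet> x' s)) (at s within {0..})"
      unfolding a_def hl_def grad_eq using chain_vd[OF xd hyp_deriv] s by simp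
    then have "((\<lambda>s. hl (x s)) has_vector_derivative (- (a s \<bullet> Fz s))) (at s within {0..})"
      unfolding x'_def by simp
    then show ?thesis
      by (rule has_vector_derivative_within_subset) auto
  qed
  define C where "C = M1\<^sup>2 * (norm (G 0))\<^sup>2 / (2 * \<mu>g\<^sup>2)"
  have pt: "(norm (a s))\<^sup>2 / 2 \<le> - (- (a s \<bullet> Fz s)) + C * exp (- (2 * \<beta>) * s)" if s: "s \<in> {0..t}" for s
  proof -
    have s0: "s \<ge> 0" using s by simp
    have "norm (a s - Fz s) \<le> M1 * norm (y s - ystar g (x s))"
      unfolding a_def Fz_def hl_def by (rule M1_bound)
    also have "\<dots> \<le> M1 * (norm (G s) / \<mu>g)"
      unfolding G_def using M1_pos by (intro mult_left_mono dist_ystar) auto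
    also have "\<dots> = M1 * exp (- \<beta> * s) * norm (G 0) / \<mu>g" using Gn[OF s0] by simp
    finally have b: "norm (a s - Fz s) \<le> M1 * exp (- \<beta> * s) * norm (G 0) / \<mu>g" .
    have "(norm (a s - Fz s))\<^sup>2 \<le> (M1 * exp (- \<beta> * s) * norm (G 0) / \<mu>g)\<^sup>2"
      by (rule power_mono[OF b norm_ge_zero])
    also have "\<dots> = 2 * C * exp (- (2 * \<beta>) * s)"
      unfolding C_def using mu_pos
      by (simp add: power_mult_distrib power_divide field_simps exp_double[symmetric] power2_eq_square
          mult_exp_exp)
    finally have c: "(norm (a s - Fz s))\<^sup>2 \<le> 2 * C * exp (- (2 * \<beta>) * s)" .
    have "(norm (a s - Fz s))\<^sup>2 = (norm (a s))\<^sup>2 - 2 * (a s \<bullet> Fz s) + (norm (Fz s))\<^sup>2"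
      by (simp add: power2_norm_eq_inner inner_diff_left inner_diff_right inner_commute)
    moreover have "(norm (Fz s))\<^sup>2 \<ge> 0" by simp
    ultimately have "(norm (a s))\<^sup>2 \<le> 2 * (a s \<bullet> Fz s) + 2 * C * exp (- (2 * \<beta>) * s)"
      using c by linarith
    then show ?thesis by simp
  qed
  have cx: "continuous_on {0..t} x"
    unfolding continuous_on_eq_continuous_within
  proof
    fix s assume "s \<in> {0..t}"
    then have "continuous (at s within {0..}) x" using xd[of s] has_vector_derivative_continuous by auto
    then show "continuous (at s within {0..t}) x" by (rule continuous_within_subset) auto
  qed
  have ca: "continuous_on {0..t} (\<lambda>\<tau>. (norm (a \<tau>))\<^sup>2)"
    unfolding a_def hl_def
    by (intro continuous_intros continuous_on_compose2[OF grad_cont cx]) auto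
  have int: "(\<lambda>\<tau>. (norm (a \<tau>))\<^sup>2) integrable_on {0..t}"
    by (rule integrable_continuous_interval[OF ca])
  define I where "I = integral {0..t} (\<lambda>\<tau>. (norm (a \<tau>))\<^sup>2)"
  have h1: "((\<lambda>\<tau>. (norm (a \<tau>))\<^sup>2 / 2) has_integral I / 2) {0..t}"
    using has_integral_divide[OF integrable_integral[OF int], of 2] unfolding I_def by simp
  have h2: "((\<lambda>\<tau>. - (a \<tau> \<bullet> Fz \<tau>)) has_integral (hl (x t) - hl (x 0))) {0..t}"
    using fundamental_theorem_of_calculus[of 0 t "\<lambda>s. hl (x s)", OF _ Phid] t_pos by simp
  define E where "E = - exp (- (2 * \<beta>) * t) / (2 * \<beta>) - (- exp (- (2 * \<beta>) * 0) / (2 * \<beta>))"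
  have h3: "((\<lambda>\<tau>. exp (- (2 * \<beta>) * \<tau>)) has_integral E) {0..t}"
    unfolding E_def
  proof (rule fundamental_theorem_of_calculus)
    show "0 \<le> t" using t_pos by simp
    fix s :: real assume "s \<in> {0..t}"
    have "((\<lambda>\<tau>. - exp (- (2 * \<beta>) * \<tau>) / (2 * \<beta>)) has_real_derivative exp (- (2 * \<beta>) * s)) (at s within {0..t})"
      using beta_pos by (auto intro!: derivative_eq_intros)
    then show "((\<lambda>\<tau>. - exp (- (2 * \<beta>) * \<tau>) / (2 * \<beta>)) has_vector_derivative exp (- (2 * \<beta>) * s)) (at s within {0..t})"
      by (simp add: has_real_derivative_iff_has_vector_derivative)
  qed
  have h4: "((\<lambda>\<tau>. - (- (a \<tau> \<bullet> Fz \<tau>)) + C * exp (- (2 * \<beta>) * \<tau>)) has_integral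
      (- (hl (x t) - hl (x 0)) + C * E)) {0..t}"
    by (intro has_integral_add has_integral_neg h2 has_integral_mult_right h3)
  have le: "I / 2 \<le> - (hl (x t) - hl (x 0)) + C * E"
    by (rule has_integral_le[OF h1 h4 pt])
  have E_le: "E \<le> 1 / (2 * \<beta>)"
    unfolding E_def using beta_pos by (simp add: divide_simps)
  have C0: "C \<ge> 0" unfolding C_def by simp
  have "C * E \<le> C * (1 / (2 * \<beta>))" by (rule mult_left_mono[OF E_le C0])
  also have "\<dots> = M1\<^sup>2 / (4 * \<beta> * \<mu>g\<^sup>2) * (norm (gy (x 0, y 0)))\<^sup>2"
    unfolding C_def G_def using beta_pos mu_pos by (simp add: field_simps)
  finally have CE: "C * E \<le> M1\<^sup>2 / (4 * \<beta> * \<mu>g\<^sup>2) * (norm (gy (x 0, y 0)))\<^sup>2" .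
  have "hl xs \<le> hl (x t)" unfolding hl_def by (rule xs_min)
  with le CE have fin: "I / 2 \<le> hyperobj f g (x 0) - hyperobj f g xs
      + M1\<^sup>2 / (4 * \<beta> * \<mu>g\<^sup>2) * (norm (gy (x 0, y 0)))\<^sup>2"
    unfolding hl_def by linarith
  have "1 / (2 * t) * I = (1 / t) * (I / 2)" by simp
  also have "\<dots> \<le> 1 / t * (hyperobj f g (x 0) - hyperobj f g xs
      + M1\<^sup>2 / (4 * \<beta> * \<mu>g\<^sup>2) * (norm (gy (x 0, y 0)))\<^sup>2)"
    using fin t_pos by (intro mult_left_mono) auto
  finally show ?thesis using int unfolding I_def a_def hl_def by simp
qed


end
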